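(* For every positive integer $n$, $|\Delta(n)|$ equals the number of partitions of $n$ into distinct parts, which equals the number of partitions of $n$ into odd parts.
   Context: A partition of a positive integer $n$ is a finite non-increasing sequence $\alpha=(\alpha_1,\dots,\alpha_l)$ of positive integers with sum $n$; $\mathcal{P}(n)$ is the set of partitions of $n$, and $\alpha_i=0$ for $i>l$. The diagonal sequence is $\delta(\alpha)=(d_k)_{k\ge1}$ with $d_k=|\{i:1\le i\le k,\ \alpha_i+i-1\ge k\}|$, trailing zeros omitted, and $\Delta(n)=\{\delta(\alpha):\alpha\in\mathcal{P}(n)\}$. *)

theory Defs
  imports Main
begin

definition partitions :: "nat \<Rightarrow> nat list set" where
  "partitions n = {xs. sorted_wrt (\<ge>) xs \<and> (\<forall>x\<in>set xs. 0 < x) \<and> sum_list xs = n}"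

definition part :: "nat list \<Rightarrow> nat \<Rightarrow> nat" where
  "part xs i = (if 1 \<le> i \<and> i \<le> length xs then xs ! (i - 1) else 0)"

text \<open>Diagonal sequence as a function on indices k \<ge> 1 (value 0 at k = 0);
  it is eventually zero, so equality of these functions is equality of the
  sequences with trailing zeros omitted.\<close>
definition diag :: "nat list \<Rightarrow> nat \<Rightarrow> nat" where
  "diag xs k = card {i. 1 \<le> i \<and> i \<le> k \<and> part xs i + i - 1 \<ge> k}"

definition Diag :: "nat \<Rightarrow> (nat \<Rightarrow> nat) set" where
  "Diag n = diag ` partitions n"

end

theory Submission
  imports "HOL-Library.Multiset" Defs
begin


lemma diag_alt: "diag xs k = card {i. 1 \<le> i \<and> i \<le> k \<and> k < part xs i + i}"
  unfolding diag_def by (rule arg_cong[where f=card]) auto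

lemma part_gt: "i > length xs \<Longrightarrow> part xs i = 0"
  by (simp add: part_def)

lemma diag_le: "diag xs k \<le> k"
proof -
  have "{i. 1 \<le> i \<and> i \<le> k \<and> k < part xs i + i} \<subseteq> {1..k}" by auto
  then show ?thesis unfolding diag_alt by (metis card_atLeastAtMost card_mono diff_Suc_1 finite_atLeastAtMost)
qed

lemma diag_le_len: "diag xs k \<le> length xs"
proof -
  have "{i. 1 \<le> i \<and> i \<le> k \<and> k < part xs i + i} \<subseteq> {1..length xs}"
  proof
    fix i assume "i \<in> {i. 1 \<le> i \<and> i \<le> k \<and> k < part xs i + i}"
    then show "i \<in> {1..length xs}" using part_gt[of xs i] by (cases "length xs < i") auto
  qed
  then show ?thesis unfolding diag_alt by (metis card_atLeastAtMost card_mono diff_Suc_1 finite_atLeastAtMost)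
qed

definition ispart :: "nat list \<Rightarrow> bool" where
  "ispart xs \<longleftrightarrow> sorted_wrt (\<ge>) xs \<and> (\<forall>x\<in>set xs. 0 < x)"

lemma part_pos: "ispart xs \<Longrightarrow> 1 \<le> i \<Longrightarrow> i \<le> length xs \<Longrightarrow> part xs i \<ge> 1"
  unfolding ispart_def part_def by (simp add: Suc_le_eq)

lemma part_mono: "ispart xs \<Longrightarrow> 1 \<le> i \<Longrightarrow> i \<le> j \<Longrightarrow> part xs j \<le> part xs i"
proof (cases "j \<le> length xs")
  case True
  assume a: "ispart xs" "1 \<le> i" "i \<le> j"
  show ?thesis
  proof (cases "i = j")
    case False
    then have "i - 1 < j - 1" using a by simp
    then show ?thesis using a True unfolding ispart_def part_def
      by (auto simp: sorted_wrt_iff_nth_less)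
  qed simp
qed (simp add: part_def)

lemma diag_step:
  assumes P: "ispart xs" and k1: "1 \<le> k" and lt: "diag xs k < k"
  shows "diag xs (Suc k) \<le> diag xs k"
proof -
  define S where "S k' = {i. 1 \<le> i \<and> i \<le> k' \<and> k' < part xs i + i}" for k'
  have fin: "finite (S k')" for k'
    by (rule finite_subset[of _ "{1..k'}"]) (auto simp: S_def)
  have d: "diag xs k' = card (S k')" for k' using diag_alt S_def by simp
  show ?thesis
  proof (cases "Suc k \<le> length xs")
    case False
    then have "part xs (Suc k) = 0" by (simp add: part_def)
    then have "S (Suc k) \<subseteq> S k" by (auto simp: S_def le_Suc_eq)
    then show ?thesis using d fin card_mono by metis
  next
    case True
    define A where "A = {i. 1 \<le> i \<and> i \<le> k \<and> part xs i + i \<le> k}"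
    have finA: "finite A" by (rule finite_subset[of _ "{1..k}"]) (auto simp: A_def)
    have "A \<noteq> {}"
    proof
      assume "A = {}"
      then have "S k = {1..k}" by (auto simp: A_def S_def)
      then show False using lt d by simp
    qed
    define i0 where "i0 = Max A"
    have i0A: "i0 \<in> A" using finA \<open>A \<noteq> {}\<close> i0_def by simp
    have "part xs k \<ge> 1" using part_pos[OF P k1] True by simp
    then have "i0 \<noteq> k" using i0A by (auto simp: A_def)
    then have i0k: "i0 < k" using i0A by (simp add: A_def)
    have "Suc i0 \<notin> A" using Max_ge[OF finA] i0_def by fastforce
    then have g: "k < part xs (Suc i0) + Suc i0" using i0k by (simp add: A_def)
    have "part xs (Suc i0) \<le> part xs i0" using part_mono[OF P] i0A by (simp add: A_def)
    then have j0eq: "part xs (Suc i0) + Suc i0 = Suc k" using g i0A by (simp add: A_def)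
    have j0: "Suc i0 \<in> S k" using g i0k by (simp add: S_def)
    have "S (Suc k) \<subseteq> insert (Suc k) (S k - {Suc i0})"
      using j0eq by (auto simp: S_def le_Suc_eq)
    then have "card (S (Suc k)) \<le> card (insert (Suc k) (S k - {Suc i0}))"
      by (intro card_mono) (simp_all add: fin)
    also have "\<dots> \<le> Suc (card (S k - {Suc i0}))" by (simp add: card_insert_if fin)
    also have "\<dots> = card (S k)" using j0 fin
      by (metis card_Suc_Diff1)
    finally show ?thesis using d by simp
  qed
qed

lemma diag_G:
  assumes P: "ispart xs" and j1: "1 \<le> j" and lt: "diag xs j < j" and jk: "j \<le> k"
  shows "diag xs k \<le> diag xs j \<and> diag xs k < k"
  using jk
proof (induction k rule: dec_induct)
  case base then show ?case using lt by simp
next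
  case (step m)
  then have "diag xs (Suc m) \<le> diag xs m" using diag_step[OF P, of m] j1 by simp
  then show ?case using step by simp
qed

lemma diag_zero:
  assumes "sum_list xs + length xs < k" shows "diag xs k = 0"
proof -
  have "{i. 1 \<le> i \<and> i \<le> k \<and> k < part xs i + i} = {}"
  proof (safe)
    fix i assume i: "1 \<le> i" "i \<le> k" "k < part xs i + i"
    show "i \<in> {}"
    proof (cases "i \<le> length xs")
      case True
      then have "part xs i \<le> sum_list xs" using i unfolding part_def
        by (simp add: elem_le_sum_list)
      then show ?thesis using i True assms by simp
    next
      case False then show ?thesis using i by (simp add: part_def)
    qed
  qed
  then show ?thesis by (simp add: diag_alt)
qed

lemma conv_interval:
  fixes T :: "nat set"
  assumes "finite T" "i \<in> T" "\<And>k. k \<in> T \<Longrightarrow> i \<le> k"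
    "\<And>a b. a \<in> T \<Longrightarrow> i \<le> b \<Longrightarrow> b \<le> a \<Longrightarrow> b \<in> T"
  shows "T = {i..<i + card T}"
proof -
  define M where "M = Max T"
  have ne: "T \<noteq> {}" using assms(2) by blast
  have MT: "M \<in> T" unfolding M_def using Max_in[OF assms(1) ne] .
  have "T = {i..M}"
  proof
    show "T \<subseteq> {i..M}" unfolding M_def using assms(1,3) Max_ge by auto
    show "{i..M} \<subseteq> T" using assms(4)[OF MT] by auto
  qed
  moreover have "{i..M} = {i..<i + card {i..M}}" using assms(3)[OF MT] by auto
  ultimately show ?thesis by simp
qed

lemma part_map_upt: "part (map f [1..<m+1]) i = (if 1 \<le> i \<and> i \<le> m then f i else 0)"
  by (auto simp: part_def nth_map simp del: upt_Suc)

lemma diag_exists_distinct: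
  assumes P: "ispart xs"
  shows "\<exists>ys. ispart ys \<and> distinct ys \<and> diag ys = diag xs"
proof -
  define d where "d = diag xs"
  define B where "B = sum_list xs + length xs + 1"
  define m where "m = Max (range d)"
  have finr: "finite (range d)"
    by (rule finite_subset[of _ "{..length xs}"]) (auto simp: d_def diag_le_len)
  have dm: "d k \<le> m" for k using finr m_def by simp
  have mr: "m \<in> range d" using finr m_def by (metis Max_in UNIV_not_empty image_is_empty)
  have dk: "d k = k" if "1 \<le> k" "k \<le> m" for k
  proof (rule ccontr)
    assume "d k \<noteq> k"
    then have lt: "d k < k" using diag_le d_def by (metis le_neq_implies_less)
    have "d j < m" for j
    proof (cases "k \<le> j")
      case True
      then show ?thesis using diag_G[OF P that(1) _ True] lt that d_def by force
    next
      case False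
      then show ?thesis using diag_le[of xs j] d_def that by simp
    qed
    then show False using mr by auto
  qed
  have big: "d k < k" if "m < k" for k using dm[of k] that by simp
  have zero: "d k = 0" if "B \<le> k" for k using diag_zero[of xs k] that B_def d_def by simp
  define c where "c i = card {k. i \<le> d k}" for i
  have Tfin: "finite {k. i \<le> d k}" if "1 \<le> i" for i
  proof (rule finite_subset[of _ "{..<B}"])
    show "{k. i \<le> d k} \<subseteq> {..<B}"
    proof
      fix k assume "k \<in> {k. i \<le> d k}"
      then have "i \<le> d k" by (rule CollectD)
      then have "d k \<noteq> 0" using that by linarith
      then have "\<not> B \<le> k" using zero[of k] by auto
      then show "k \<in> {..<B}" by simp
    qed
  qed simp
  have Tint: "{k. i \<le> d k} = {i..<i + c i}" if i: "1 \<le> i" "i \<le> m" for i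
    unfolding c_def
  proof (rule conv_interval[OF Tfin[OF i(1)]])
    show "i \<in> {k. i \<le> d k}" using dk i by simp
    show "i \<le> k" if "k \<in> {k. i \<le> d k}" for k using that diag_le[of xs k] d_def by simp
    show "b \<in> {k. i \<le> d k}" if "a \<in> {k. i \<le> d k}" "i \<le> b" "b \<le> a" for a b
    proof (cases "b \<le> m")
      case True then show ?thesis using dk that i by simp
    next
      case False
      then have "d b < b" using big by simp
      then have "d a \<le> d b" using diag_G[OF P _ _ that(3)] that i d_def by simp
      then show ?thesis using that by simp
    qed
  qed
  have cpos: "c i \<ge> 1" if "1 \<le> i" "i \<le> m" for i
    using Tint[OF that] dk[OF that] by (metis Tfin[OF that(1)] c_def card_0_eq empty_iff le_refl less_one mem_Collect_eq not_le)
  have cstrict: "c j < c i" if "1 \<le> i" "i < j" "j \<le> m" for i j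
    unfolding c_def
  proof (rule psubset_card_mono)
    show "finite {k. i \<le> d k}" using Tfin that by simp
    have "i \<in> {k. i \<le> d k}" "i \<notin> {k. j \<le> d k}" using dk that by auto
    then show "{k. j \<le> d k} \<subset> {k. i \<le> d k}" using that by auto
  qed
  define ys where "ys = map c [1..<m+1]"
  have "ispart ys"
    unfolding ispart_def ys_def
  proof
    show "sorted_wrt (\<ge>) (map c [1..<m+1])"
      unfolding sorted_wrt_iff_nth_less
    proof (intro allI impI)
      fix a b assume ab: "a < b" "b < length (map c [1..<m+1])"
      then have "c (Suc b) < c (Suc a)" by (intro cstrict) (auto simp del: upt_Suc)
      then show "map c [1..<m+1] ! b \<le> map c [1..<m+1] ! a" using ab
        by (simp add: nth_map del: upt_Suc)
    qed
    show "\<forall>x\<in>set (map c [1..<m+1]). 0 < x"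
    proof
      fix x assume "x \<in> set (map c [1..<m+1])"
      then obtain i where "1 \<le> i" "i \<le> m" "x = c i" by (auto simp del: upt_Suc)
      then show "0 < x" using cpos by fastforce
    qed
  qed
  moreover have "distinct ys"
    unfolding ys_def distinct_map
  proof (intro conjI distinct_upt inj_onI)
    fix a b assume "a \<in> set [1..<m+1]" "b \<in> set [1..<m+1]" "c a = c b"
    then show "a = b" using cstrict[of a b] cstrict[of b a]
      by (simp del: upt_Suc) (metis linorder_neqE_nat less_irrefl)
  qed
  moreover have "diag ys = diag xs"
  proof
    fix k
    have "{i. 1 \<le> i \<and> i \<le> k \<and> k < part ys i + i} = {1..d k}"
    proof (rule set_eqI, rule iffI)
      fix i assume "i \<in> {i. 1 \<le> i \<and> i \<le> k \<and> k < part ys i + i}"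
      then have i: "1 \<le> i" "i \<le> k" "k < part ys i + i" by auto
      then have im: "i \<le> m" unfolding ys_def part_map_upt by (auto split: if_splits)
      then have "k \<in> {i..<i + c i}" using i unfolding ys_def part_map_upt by simp
      then have "i \<le> d k" using Tint[OF i(1) im] by blast
      then show "i \<in> {1..d k}" using i by simp
    next
      fix i assume i: "i \<in> {1..d k}"
      then have im: "i \<le> m" "i \<le> k" using dm[of k] diag_le[of xs k] d_def by auto
      have "k \<in> {i..<i + c i}" using Tint[of i] i im by auto
      then have "k < part ys i + i" using i im unfolding ys_def part_map_upt by simp
      then show "i \<in> {i. 1 \<le> i \<and> i \<le> k \<and> k < part ys i + i}" using i im by simp
    qed
    then show "diag ys k = diag xs k" by (simp add: diag_alt d_def)
  qed
  ultimately show ?thesis by blast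
qed

lemma strict_gap:
  assumes P: "ispart xs" and D: "distinct xs" and b: "a + c < length xs"
  shows "xs ! a \<ge> xs ! (a + c) + c"
  using b
proof (induction c)
  case 0 then show ?case by simp
next
  case (Suc c)
  have IH: "xs ! a \<ge> xs ! (a + c) + c" using Suc by simp
  have "xs ! (a + c) \<ge> xs ! (a + Suc c)" using P Suc.prems unfolding ispart_def
    by (auto simp: sorted_wrt_iff_nth_less)
  moreover have "xs ! (a + c) \<noteq> xs ! (a + Suc c)" using D Suc.prems
    by (simp add: nth_eq_iff_index_eq)
  ultimately show ?case using IH by simp
qed

lemma down_closed:
  fixes S :: "nat set"
  assumes "finite S" "\<And>j. j \<in> S \<Longrightarrow> 1 \<le> j"
    "\<And>j j'. j \<in> S \<Longrightarrow> 1 \<le> j' \<Longrightarrow> j' \<le> j \<Longrightarrow> j' \<in> S"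
  shows "S = {1..card S}"
proof (cases "S = {}")
  case False
  then obtain j where "j \<in> S" by blast
  then have "1 \<in> S" using assms by blast
  then have "S = {1..<1 + card S}" by (rule conv_interval[OF assms(1) _ assms(2) assms(3)])
  then show ?thesis by (rule trans) auto
qed simp

lemma conj_distinct:
  assumes P: "ispart xs" and D: "distinct xs" and i1: "1 \<le> i"
  shows "card {k. i \<le> diag xs k} = part xs i"
proof -
  define S where "S k = {j. 1 \<le> j \<and> j \<le> k \<and> k < part xs j + j}" for k
  have fin: "finite (S k)" for k
    by (rule finite_subset[of _ "{1..k}"]) (auto simp: S_def)
  have d: "diag xs k = card (S k)" for k using diag_alt S_def by simp
  have SL: "j \<le> length xs" if "j \<in> S k" for j k
    using that by (auto simp: S_def part_def split: if_splits)
  have closed: "j' \<in> S k" if "j \<in> S k" "1 \<le> j'" "j' \<le> j" for j j' k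
  proof -
    have jl: "j \<le> length xs" using SL that by simp
    have "xs ! (j' - 1) \<ge> xs ! ((j' - 1) + (j - j')) + (j - j')"
      by (rule strict_gap[OF P D]) (use that jl in auto)
    moreover have "(j' - 1) + (j - j') = j - 1" using that by simp
    ultimately have "part xs j' + j' \<ge> part xs j + j" using that jl
      unfolding part_def by auto
    then show ?thesis using that by (auto simp: S_def)
  qed
  have Seq: "S k = {1..diag xs k}" for k
    unfolding d
  proof (rule down_closed[OF fin])
    show "1 \<le> j" if "j \<in> S k" for j using that by (simp add: S_def)
    show "j' \<in> S k" if "j \<in> S k" "1 \<le> j'" "j' \<le> j" for j j' using closed that by blast
  qed
  have "{k. i \<le> diag xs k} = {i..<part xs i + i}"
  proof -
    have "i \<le> diag xs k \<longleftrightarrow> i \<in> S k" for k using Seq[of k] i1 by auto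
    then have "k \<in> {k. i \<le> diag xs k} \<longleftrightarrow> k \<in> {i..<part xs i + i}" for k
      using i1 unfolding S_def by simp
    then show ?thesis by (rule set_eqI)
  qed
  then show ?thesis by simp
qed

lemma part_eq_imp:
  assumes "ispart xs" "ispart ys" "\<And>i. 1 \<le> i \<Longrightarrow> part xs i = part ys i"
  shows "xs = ys"
proof -
  have "\<not> length xs < length ys"
  proof
    assume l: "length xs < length ys"
    then have "part ys (length ys) \<ge> 1" using part_pos[OF assms(2), of "length ys"] by simp
    moreover have "part xs (length ys) = 0" using part_gt l by simp
    ultimately show False using assms(3)[of "length ys"] l by simp
  qed
  moreover have "\<not> length ys < length xs"
  proof
    assume l: "length ys < length xs"
    then have "part xs (length xs) \<ge> 1" using part_pos[OF assms(1), of "length xs"] by simp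
    moreover have "part ys (length xs) = 0" using part_gt l by simp
    ultimately show False using assms(3)[of "length xs"] l by simp
  qed
  ultimately have len: "length xs = length ys" by simp
  have "xs ! a = ys ! a" if "a < length xs" for a
    using assms(3)[of "Suc a"] that len by (simp add: part_def)
  then show ?thesis using len by (simp add: list_eq_iff_nth_eq)
qed

lemma diag_inj: "inj_on diag {xs. ispart xs \<and> distinct xs}"
proof (rule inj_onI)
  fix xs ys assume xs: "xs \<in> {xs. ispart xs \<and> distinct xs}" and ys: "ys \<in> {xs. ispart xs \<and> distinct xs}"
    and e: "diag xs = diag ys"
  show "xs = ys"
    using xs ys conj_distinct[of xs] conj_distinct[of ys] e
    by (intro part_eq_imp) auto
qed

lemma diag_sum:
  assumes "sum_list xs + length xs < N"
  shows "(\<Sum>k<N. diag xs k) = sum_list xs"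
proof -
  let ?L = "length xs"
  have dk: "diag xs k = (\<Sum>i\<in>{1..?L}. if i \<le> k \<and> k < part xs i + i then 1 else 0)" for k
  proof -
    have "{i. 1 \<le> i \<and> i \<le> k \<and> k < part xs i + i} = {i\<in>{1..?L}. i \<le> k \<and> k < part xs i + i}"
      by (auto simp: part_def split: if_splits)
    then show ?thesis by (simp add: diag_alt sum.inter_filter[symmetric])
  qed
  have pb: "part xs i + i \<le> N" if "i \<in> {1..?L}" for i
  proof -
    have "part xs i \<le> sum_list xs" using that by (auto simp: part_def elem_le_sum_list)
    then show ?thesis using that assms by auto
  qed
  have "(\<Sum>k<N. diag xs k) = (\<Sum>i\<in>{1..?L}. \<Sum>k<N. if i \<le> k \<and> k < part xs i + i then 1 else 0)"
    unfolding dk by (rule sum.swap)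
  also have "\<dots> = (\<Sum>i\<in>{1..?L}. card {k\<in>{..<N}. i \<le> k \<and> k < part xs i + i})"
    by (simp add: sum.inter_filter[symmetric])
  also have "\<dots> = (\<Sum>i\<in>{1..?L}. part xs i)"
  proof (rule sum.cong)
    fix i assume i: "i \<in> {1..?L}"
    have "{k\<in>{..<N}. i \<le> k \<and> k < part xs i + i} = {i..<part xs i + i}" using pb[OF i] by auto
    then show "card {k\<in>{..<N}. i \<le> k \<and> k < part xs i + i} = part xs i" by simp
  qed simp
  also have "\<dots> = (\<Sum>a<?L. xs ! a)"
    by (rule sum.reindex_bij_witness[of _ Suc "\<lambda>i. i - 1"]) (auto simp: part_def)
  also have "\<dots> = sum_list xs" by (simp add: sum_list_sum_nth atLeast0LessThan)
  finally show ?thesis .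
qed



unbundle bit_operations_syntax

lemma odd_pow_uniq:
  fixes p q :: nat
  assumes "odd p" "odd q" "p * 2 ^ j = q * 2 ^ j'"
  shows "p = q \<and> j = j'"
  using assms
proof (induction j arbitrary: j')
  case 0
  then show ?case by (cases j') auto
next
  case (Suc j)
  then show ?case by (cases j') auto
qed

lemma odd_pow_exists:
  fixes a :: nat
  assumes "0 < a" shows "\<exists>p j. odd p \<and> a = p * 2 ^ j"
  using assms
proof (induction a rule: less_induct)
  case (less a)
  show ?case
  proof (cases "odd a")
    case True then show ?thesis by (rule_tac x=a in exI, rule_tac x=0 in exI) simp
  next
    case False
    then obtain b where b: "a = 2 * b" by blast
    then have "0 < b" "b < a" using less.prems by auto
    then obtain p j where "odd p" "b = p * 2 ^ j" using less.IH by blast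
    then show ?thesis using b by (rule_tac x=p in exI, rule_tac x="Suc j" in exI) simp
  qed
qed

lemma bits_finite: "finite {j. bit (c::nat) j}"
proof (rule finite_subset[of _ "{..<c}"])
  show "{j. bit c j} \<subseteq> {..<c}"
  proof
    fix j assume "j \<in> {j. bit c j}"
    then have "odd (c div 2 ^ j)" by (simp add: bit_iff_odd)
    then have "c div 2 ^ j \<noteq> 0" by (metis dvd_0_right)
    then have "2 ^ j \<le> c" by (metis div_less not_le)
    then have "j < c" using less_le_trans[OF less_exp[of j]] by blast
    then show "j \<in> {..<c}" by simp
  qed
qed simp

lemma bit_sum_pow:
  assumes "finite J" shows "bit (\<Sum>j\<in>J. 2 ^ j :: nat) i \<longleftrightarrow> i \<in> J"
  using assms
proof (induction J arbitrary: i rule: finite_induct)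
  case empty then show ?case by simp
next
  case (insert x F)
  have "(\<Sum>j\<in>insert x F. 2 ^ j :: nat) = 2 ^ x + (\<Sum>j\<in>F. 2 ^ j)" using insert by simp
  also have "\<dots> = 2 ^ x OR (\<Sum>j\<in>F. 2 ^ j)"
    by (rule disjunctive_add) (use insert in \<open>auto simp: bit_exp_iff\<close>)
  finally show ?case using insert by (auto simp: bit_or_iff bit_exp_iff)
qed

lemma sum_bits: "(\<Sum>j\<in>{j. bit c j}. 2 ^ j :: nat) = c"
  by (rule bit_eq_iff[THEN iffD2]) (simp add: bit_sum_pow[OF bits_finite])

lemma sum_mset_count: "sum_mset M = (\<Sum>x\<in>set_mset M. count M x * (x::nat))"
proof (induction M)
  case empty then show ?case by simp
next
  case (add x M)
  show ?case
  proof (cases "x \<in># M")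
    case True
    have "(\<Sum>y\<in>set_mset (add_mset x M). count (add_mset x M) y * y)
        = (\<Sum>y\<in>set_mset M. count M y * y + (if y = x then y else 0))"
      using True by (intro sum.cong) (auto simp: insert_absorb)
    also have "\<dots> = (\<Sum>y\<in>set_mset M. count M y * y) + x"
      using True by (simp add: sum.distrib)
    finally show ?thesis using add by simp
  next
    case False
    have "(\<Sum>y\<in>set_mset (add_mset x M). count (add_mset x M) y * y)
        = x + (\<Sum>y\<in>set_mset M. count (add_mset x M) y * y)"
      using False by (simp add: not_in_iff)
    also have "(\<Sum>y\<in>set_mset M. count (add_mset x M) y * y) = (\<Sum>y\<in>set_mset M. count M y * y)"
    proof (rule sum.cong)
      fix y assume "y \<in> set_mset M"
      then have "y \<noteq> x" using False by auto
      then show "count (add_mset x M) y * y = count M y * y" by simp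
    qed simp
    finally show ?thesis using add by simp
  qed
qed

definition glai :: "nat multiset \<Rightarrow> nat set" where
  "glai M = (\<lambda>(p, j). p * 2 ^ j) ` Sigma (set_mset M) (\<lambda>p. {j. bit (count M p) j})"

definition Dset :: "nat \<Rightarrow> nat set set" where
  "Dset n = {A. finite A \<and> 0 \<notin> A \<and> \<Sum>A = n}"

definition Oset :: "nat \<Rightarrow> nat multiset set" where
  "Oset n = {M. (\<forall>x\<in>#M. odd x) \<and> sum_mset M = n}"

lemma glai_inj_pairs:
  fixes M :: "nat multiset"
  assumes "\<forall>x\<in>#M. odd x"
  shows "inj_on (\<lambda>(p, j). p * 2 ^ j) (Sigma (set_mset M) (\<lambda>p. {j. bit (count M p) j}))"
proof (rule inj_onI)
  fix x y assume x: "x \<in> Sigma (set_mset M) (\<lambda>p. {j. bit (count M p) j})"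
    and y: "y \<in> Sigma (set_mset M) (\<lambda>p. {j. bit (count M p) j})"
    and e: "(\<lambda>(p, j). p * 2 ^ j) x = (\<lambda>(p, j). p * 2 ^ j) y"
  obtain p j q k where xy: "x = (p, j)" "y = (q, k)" by fastforce
  have "odd p" "odd q" using x y xy assms by auto
  then show "x = y" using odd_pow_uniq[of p q j k] e xy by simp
qed

lemma glai_props:
  assumes "\<forall>x\<in>#M. odd x"
  shows "finite (glai M)" "0 \<notin> glai M" "\<Sum>(glai M) = sum_mset M"
proof -
  have fS: "finite (Sigma (set_mset M) (\<lambda>p. {j. bit (count M p) j}))"
    by (simp add: bits_finite)
  then show "finite (glai M)" by (simp add: glai_def)
  show "0 \<notin> glai M" using assms by (auto simp: glai_def)
  have "\<Sum>(glai M) = (\<Sum>(p, j)\<in>Sigma (set_mset M) (\<lambda>p. {j. bit (count M p) j}). p * 2 ^ j)"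
    unfolding glai_def by (subst sum.reindex[OF glai_inj_pairs[OF assms]]) (simp add: case_prod_beta')
  also have "\<dots> = (\<Sum>p\<in>set_mset M. \<Sum>j\<in>{j. bit (count M p) j}. p * 2 ^ j)"
    by (rule sum.Sigma[symmetric]) (simp_all add: bits_finite)
  also have "\<dots> = (\<Sum>p\<in>set_mset M. count M p * p)"
    by (intro sum.cong) (simp_all add: sum_distrib_left[symmetric] sum_bits)
  also have "\<dots> = sum_mset M" by (simp add: sum_mset_count)
  finally show "\<Sum>(glai M) = sum_mset M" .
qed

lemma glai_bits:
  assumes "\<forall>x\<in>#M. odd x" "odd p"
  shows "{j. p * 2 ^ j \<in> glai M} = {j. bit (count M p) j}"
proof safe
  fix j assume "p * 2 ^ j \<in> glai M"
  then obtain q j' where "q \<in># M" "bit (count M q) j'" "p * 2 ^ j = q * 2 ^ j'"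
    by (auto simp: glai_def)
  then show "bit (count M p) j" using odd_pow_uniq[of p q j j'] assms by auto
next
  fix j assume b: "bit (count M p) j"
  then have "count M p \<noteq> 0" by (metis bit_0_eq bot_apply bot_bool_def)
  then have "p \<in># M" by simp
  then show "p * 2 ^ j \<in> glai M" using b unfolding glai_def by force
qed

lemma glai_inj: "inj_on glai {M. \<forall>x\<in>#M. odd x}"
proof (rule inj_onI)
  fix M N assume M: "M \<in> {M. \<forall>x\<in>#M. odd x}" and N: "N \<in> {M. \<forall>x\<in>#M. odd x}" and e: "glai M = glai N"
  show "M = N"
  proof (rule multiset_eqI)
    fix p show "count M p = count N p"
    proof (cases "odd p")
      case True
      then have "{j. bit (count M p) j} = {j. bit (count N p) j}"
        using glai_bits[of M p] glai_bits[of N p] M N e by simp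
      then show ?thesis by (simp add: bit_eq_iff set_eq_iff)
    next
      case False
      then show ?thesis using M N by (metis count_inI mem_Collect_eq)
    qed
  qed
qed

lemma glai_surj:
  assumes "finite A" "0 \<notin> A"
  shows "\<exists>M. (\<forall>x\<in>#M. odd x) \<and> glai M = A"
proof -
  have finJ: "finite {j. p * 2 ^ j \<in> A}" if "odd p" for p
  proof (rule finite_vimageI[of A "\<lambda>j. p * 2 ^ j", unfolded vimage_def])
    show "finite A" by fact
    show "inj (\<lambda>j. p * 2 ^ j)" using that by (auto simp: inj_on_def)
  qed
  define c where "c p = (if odd p then \<Sum>j\<in>{j. p * 2 ^ j \<in> A}. 2 ^ j else (0::nat))" for p :: nat
  have bc: "bit (c p) j \<longleftrightarrow> odd p \<and> p * 2 ^ j \<in> A" for p j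
    by (simp add: c_def bit_sum_pow[OF finJ])
  have "{p. 0 < c p} \<subseteq> {..\<Sum>A}"
  proof
    fix p assume "p \<in> {p. 0 < c p}"
    then have "c p \<noteq> 0" by simp
    then obtain j where "bit (c p) j" using bit_eq_iff[of "c p" 0] by auto
    then have "p * 2 ^ j \<in> A" using bc by simp
    then have "p * 2 ^ j \<le> \<Sum>A" using member_le_sum[of "p * 2 ^ j" A "\<lambda>x. x"] assms by simp
    moreover have "p \<le> p * 2 ^ j" by simp
    ultimately have "p \<le> \<Sum>A" by (rule order_trans[rotated])
    then show "p \<in> {..\<Sum>A}" by simp
  qed
  then have finc: "finite {p. 0 < c p}" by (auto intro: finite_subset)
  define M where "M = Abs_multiset c"
  have cM: "count M = c" using finc by (simp add: M_def count_Abs_multiset)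
  have odd: "\<forall>x\<in>#M. odd x"
  proof
    fix x assume "x \<in># M"
    then have "c x \<noteq> 0" using cM by (metis count_eq_zero_iff)
    then show "odd x" by (auto simp: c_def split: if_splits)
  qed
  have "glai M = A"
  proof safe
    fix x assume "x \<in> glai M"
    then obtain p j where "p \<in># M" "bit (count M p) j" "x = p * 2 ^ j" by (auto simp: glai_def)
    then show "x \<in> A" using bc cM by simp
  next
    fix a assume a: "a \<in> A"
    then have "0 < a" using assms by (cases a) auto
    then obtain p j where pj: "odd p" "a = p * 2 ^ j" using odd_pow_exists by blast
    then have b: "bit (count M p) j" using bc cM a by simp
    then have "count M p \<noteq> 0" by (metis bit_0_eq bot_apply bot_bool_def)
    then have "p \<in># M" by simp
    then show "a \<in> glai M" using b pj unfolding glai_def by force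
  qed
  then show ?thesis using odd by blast
qed

lemma card_D_O: "card (Oset n) = card (Dset n)"
proof (rule bij_betw_same_card[of glai])
  show "bij_betw glai (Oset n) (Dset n)"
    unfolding bij_betw_def
  proof
    show "inj_on glai (Oset n)" by (rule inj_on_subset[OF glai_inj]) (auto simp: Oset_def)
    show "glai ` Oset n = Dset n"
    proof safe
      fix M assume "M \<in> Oset n"
      then show "glai M \<in> Dset n" using glai_props[of M] by (auto simp: Oset_def Dset_def)
    next
      fix A assume A: "A \<in> Dset n"
      then obtain M where M: "\<forall>x\<in>#M. odd x" "glai M = A" using glai_surj by (auto simp: Dset_def)
      then have "M \<in> Oset n" using glai_props[of M] A by (auto simp: Oset_def Dset_def)
      then show "A \<in> glai ` Oset n" using M by blast
    qed
  qed
qed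


lemma partitions_ispart: "partitions n = {xs. ispart xs \<and> sum_list xs = n}"
  by (auto simp: partitions_def ispart_def)

lemma card_diag: "card (Diag n) = card {xs \<in> partitions n. distinct xs}"
proof -
  have "Diag n = diag ` {xs \<in> partitions n. distinct xs}"
  proof
    show "diag ` {xs \<in> partitions n. distinct xs} \<subseteq> Diag n" by (auto simp: Diag_def)
    show "Diag n \<subseteq> diag ` {xs \<in> partitions n. distinct xs}"
    proof
      fix f assume "f \<in> Diag n"
      then obtain xs where xs: "xs \<in> partitions n" "f = diag xs" by (auto simp: Diag_def)
      then have P: "ispart xs" by (simp add: partitions_ispart)
      obtain ys where ys: "ispart ys" "distinct ys" "diag ys = diag xs"
        using diag_exists_distinct[OF P] by blast
      define N where "N = sum_list xs + length xs + sum_list ys + length ys + 1"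
      have "sum_list ys = sum_list xs"
        using diag_sum[of xs N] diag_sum[of ys N] ys N_def by simp
      then have "ys \<in> {xs \<in> partitions n. distinct xs}" using ys xs by (simp add: partitions_ispart)
      moreover have "f = diag ys" using ys xs by simp
      ultimately show "f \<in> diag ` {xs \<in> partitions n. distinct xs}" by (intro image_eqI)
    qed
  qed
  moreover have "inj_on diag {xs \<in> partitions n. distinct xs}"
    by (rule inj_on_subset[OF diag_inj]) (auto simp: partitions_ispart)
  ultimately show ?thesis by (simp add: card_image)
qed

lemma rev_sorted: "sorted_wrt (\<ge>) xs \<Longrightarrow> sorted (rev (xs::nat list))"
  by (simp add: sorted_wrt_rev)

lemma card_distinct: "card {xs \<in> partitions n. distinct xs} = card (Dset n)"
proof (rule bij_betw_same_card[of set])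
  show "bij_betw set {xs \<in> partitions n. distinct xs} (Dset n)"
    unfolding bij_betw_def
  proof
    show "inj_on set {xs \<in> partitions n. distinct xs}"
    proof (rule inj_onI)
      fix xs ys assume "xs \<in> {xs \<in> partitions n. distinct xs}" "ys \<in> {xs \<in> partitions n. distinct xs}"
        "set xs = set ys"
      then have "rev xs = rev ys"
        by (intro sorted_distinct_set_unique) (auto simp: partitions_def rev_sorted)
      then show "xs = ys" by simp
    qed
    show "set ` {xs \<in> partitions n. distinct xs} = Dset n"
    proof safe
      fix xs assume "xs \<in> partitions n" "distinct xs"
      then show "set xs \<in> Dset n"
        by (auto simp: partitions_def Dset_def distinct_sum_list_conv_Sum)
    next
      fix A assume A: "A \<in> Dset n"
      define xs where "xs = rev (sorted_list_of_set A)"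
      have "set xs = A" "distinct xs" using A by (auto simp: xs_def Dset_def)
      moreover have "sorted_wrt (\<ge>) xs" by (simp add: xs_def sorted_wrt_rev)
      moreover have "\<forall>x\<in>set xs. 0 < x"
      proof
        fix x assume "x \<in> set xs"
        moreover have "0 \<notin> A" using A unfolding Dset_def by simp
        ultimately have "x \<noteq> 0" using \<open>set xs = A\<close> by metis
        then show "0 < x" by simp
      qed
      ultimately have "xs \<in> partitions n" using A
        by (auto simp: partitions_def Dset_def distinct_sum_list_conv_Sum)
      then show "A \<in> set ` {xs \<in> partitions n. distinct xs}"
        using \<open>set xs = A\<close> \<open>distinct xs\<close> by blast
    qed
  qed
qed

lemma card_odd: "card {xs \<in> partitions n. \<forall>x\<in>set xs. odd x} = card (Oset n)"
proof (rule bij_betw_same_card[of mset])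
  show "bij_betw mset {xs \<in> partitions n. \<forall>x\<in>set xs. odd x} (Oset n)"
    unfolding bij_betw_def
  proof
    show "inj_on mset {xs \<in> partitions n. \<forall>x\<in>set xs. odd x}"
    proof (rule inj_onI)
      fix xs ys assume "xs \<in> {xs \<in> partitions n. \<forall>x\<in>set xs. odd x}"
        "ys \<in> {xs \<in> partitions n. \<forall>x\<in>set xs. odd x}" and e: "mset xs = mset ys"
      then have s: "sorted (rev xs)" "sorted (rev ys)" by (auto simp: partitions_def rev_sorted)
      have "sort (rev ys) = rev xs" using e s by (intro properties_for_sort) simp_all
      moreover have "sort (rev ys) = rev ys" using s by (simp add: sorted_sort_id)
      ultimately show "xs = ys" by simp
    qed
    show "mset ` {xs \<in> partitions n. \<forall>x\<in>set xs. odd x} = Oset n"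
    proof safe
      fix xs assume "xs \<in> partitions n" "\<forall>x\<in>set xs. odd x"
      then show "mset xs \<in> Oset n"
        by (auto simp: partitions_def Oset_def sum_mset_sum_list)
    next
      fix M assume M: "M \<in> Oset n"
      define xs where "xs = rev (sorted_list_of_multiset M)"
      have mx: "mset xs = M" by (simp add: xs_def)
      have "sorted_wrt (\<ge>) xs" by (simp add: xs_def sorted_wrt_rev)
      moreover have "\<forall>x\<in>set xs. odd x" using M by (auto simp: xs_def Oset_def)
      moreover have "\<forall>x\<in>set xs. 0 < x" using calculation(2) odd_pos by blast
      moreover have "sum_mset M = n" using M by (simp add: Oset_def)
      then have "sum_list xs = n" using mx sum_mset_sum_list[of xs] by simp
      moreover note \<open>sum_list xs = n\<close>
      ultimately have "xs \<in> {xs \<in> partitions n. \<forall>x\<in>set xs. odd x}" by (simp add: partitions_def)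
      then show "M \<in> mset ` {xs \<in> partitions n. \<forall>x\<in>set xs. odd x}" using mx by blast
    qed
  qed
qed

theorem corollary2p4:
  fixes n :: nat
  assumes "0 < n"
  shows "card (Diag n) = card {xs \<in> partitions n. distinct xs}
       \<and> card {xs \<in> partitions n. distinct xs} = card {xs \<in> partitions n. \<forall>x\<in>set xs. odd x}"
  using card_diag card_distinct card_odd card_D_O by simp

end
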